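(* Let $s,t\ge0$ be integers. For each integer $m$ with $0\le m<q^{b-1}$ let $\Psi_m=\{(i,j)\in\mathbb{Z}^2:\ 0\le i<q^c-1,\ \ -t\le q^{a-1}N_b\,i-q^{b-1}N_c\,j+N_cm,\ \ -s-(q^c-1)q\le -q^ai+(q^c-1)j\}$. Then $$\#\Psi_m=\frac{(q^c+1)q}{2}+(q-1)\left\lfloor\frac{t+N_cm}{q^{b-1}}\right\rfloor+s,$$ and $$\sum_{m=0}^{q^{b-1}-1}\#\Psi_m=\frac12\left(q^{c+b-1}+q^{c+b}-q^c+q\right)+q^{b-1}s+(q-1)t.$$
   Context: $q$ is a power of a prime $p$, $b\ge1$ an integer, $a=b+1$, $c=a+b$, and $N_k=(q^k-1)/(q-1)$ for $k\ge1$. *)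

theory Defs
  imports Complex_Main "HOL-Computational_Algebra.Primes"
begin

text \<open>N_k = (q^k - 1)/(q - 1); exact division for q \<ge> 2.\<close>
definition NN :: "int \<Rightarrow> nat \<Rightarrow> int" where
  "NN q k = (q ^ k - 1) div (q - 1)"

definition Psi :: "int \<Rightarrow> nat \<Rightarrow> int \<Rightarrow> int \<Rightarrow> int \<Rightarrow> (int \<times> int) set" where
  "Psi q b s t m = (let a = b + 1; c = a + b in
     {(i, j). 0 \<le> i \<and> i < q ^ c - 1 \<and>
        - t \<le> q ^ (a - 1) * NN q b * i - q ^ (b - 1) * NN q c * j + NN q c * m \<and>
        - s - (q ^ c - 1) * q \<le> - (q ^ a) * i + (q ^ c - 1) * j})"

end

theory Submission
  imports Defs
begin

lemma le_div_iff_int: assumes "0 < (n::int)" shows "(j \<le> x div n) = (j * n \<le> x)"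
proof
  assume "j \<le> x div n"
  then have "j*n \<le> (x div n)*n" using assms by (simp add: mult_right_mono)
  also have "\<dots> \<le> x" using assms by (metis minus_mod_eq_mult_div add_le_cancel_left diff_add_cancel le_add_same_cancel1 pos_mod_sign mult.commute)
  finally show "j*n \<le> x" .
next
  assume h: "j*n \<le> x"
  show "j \<le> x div n"
  proof (rule ccontr)
    assume "\<not> j \<le> x div n"
    then have "(x div n + 1)*n \<le> j*n" using assms by (simp add: mult_right_mono)
    moreover have "x < (x div n + 1)*n" using assms pos_mod_bound[OF assms, of x]
      by (metis add.commute distrib_right minus_mod_eq_mult_div mult.commute mult_1 add_less_cancel_left diff_add_cancel)
    ultimately show False using h by simp
  qed
qed

lemma geo_int: "((q::int) - 1) * (\<Sum>i<k. q^i) = q^k - 1"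
  by (induction k) (auto simp: algebra_simps)

lemma gauss_int: "2 * (\<Sum>i\<in>{0..<int N}. i) = int N * (int N - 1)"
proof (induction N)
  case 0 then show ?case by simp
next
  case (Suc N)
  have "{0..<int (Suc N)} = insert (int N) {0..<int N}" by auto
  then have "(\<Sum>i\<in>{0..<int (Suc N)}. i) = int N + (\<Sum>i\<in>{0..<int N}. i)" by simp
  then show ?case using Suc by (simp add: algebra_simps)
qed

lemma gauss_int': "(L::int) \<ge> 0 \<Longrightarrow> 2 * (\<Sum>i\<in>{0..<L}. i) = L * (L - 1)"
  using gauss_int[of "nat L"] by simp

lemma block_mod:
  fixes a y n k :: int
  assumes n: "n > 0" and cop: "coprime a n"
  shows "(\<Sum>i\<in>{k..<k+n}. (a*i+y) mod n) = (\<Sum>r\<in>{0..<n}. r)"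
proof -
  let ?f = "\<lambda>i. (a*i+y) mod n"
  have inj: "inj_on ?f {k..<k+n}"
  proof
    fix i j assume i: "i \<in> {k..<k+n}" and j: "j \<in> {k..<k+n}" and e: "?f i = ?f j"
    have "n dvd (a*i+y) - (a*j+y)" using e by (simp add: mod_eq_dvd_iff)
    then have "n dvd a*(i-j)" by (simp add: algebra_simps)
    then have d: "n dvd (i-j)" using cop by (simp add: coprime_commute coprime_dvd_mult_right_iff)
    show "i = j"
    proof (rule ccontr)
      assume "i \<noteq> j"
      then have "\<bar>n\<bar> \<le> \<bar>i-j\<bar>" using d dvd_imp_le_int by auto
      then show False using i j n by auto
    qed
  qed
  have sub: "?f ` {k..<k+n} \<subseteq> {0..<n}" using n by auto
  have "card (?f ` {k..<k+n}) = card {0..<n}"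
    using card_image[OF inj] by simp
  then have "?f ` {k..<k+n} = {0..<n}" using sub by (simp add: card_subset_eq)
  then have "bij_betw ?f {k..<k+n} {0..<n}" using inj by (simp add: bij_betw_def)
  then show ?thesis by (rule sum.reindex_bij_betw)
qed

lemma multi_mod:
  fixes a y n :: int and K :: nat
  assumes n: "n > 0" and cop: "coprime a n"
  shows "2 * (\<Sum>i\<in>{0..<int K * n}. (a*i+y) mod n) = int K * n * (n - 1)"
proof (induction K)
  case 0 then show ?case by simp
next
  case (Suc K)
  have u: "{0..<int (Suc K) * n} = {0..<int K * n} \<union> {int K * n..<int K * n + n}"
    using n by (auto simp: algebra_simps) (smt (verit) mult_nonneg_nonneg of_nat_0_le_iff)
  have "(\<Sum>i\<in>{0..<int (Suc K) * n}. (a*i+y) mod n)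
      = (\<Sum>i\<in>{0..<int K * n}. (a*i+y) mod n) + (\<Sum>i\<in>{int K * n..<int K * n + n}. (a*i+y) mod n)"
    unfolding u by (rule sum.union_disjoint) auto
  also have "(\<Sum>i\<in>{int K * n..<int K * n + n}. (a*i+y) mod n) = (\<Sum>r\<in>{0..<n}. r)"
    by (rule block_mod[OF n cop])
  finally show ?case using Suc gauss_int'[of n] n by (simp add: algebra_simps)
qed

lemma div_sum:
  fixes a y n L :: int
  assumes n: "n > 0"
  shows "n * (\<Sum>i\<in>{0..<L}. (a*i+y) div n) = a * (\<Sum>i\<in>{0..<L}. i) + (\<Sum>i\<in>{0..<L}. y) - (\<Sum>i\<in>{0..<L}. (a*i+y) mod n)"
proof -
  have "n * (\<Sum>i\<in>{0..<L}. (a*i+y) div n) = (\<Sum>i\<in>{0..<L}. n * ((a*i+y) div n))"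
    by (simp add: sum_distrib_left)
  also have "\<dots> = (\<Sum>i\<in>{0..<L}. (a*i+y) - (a*i+y) mod n)"
    by (rule sum.cong) (auto simp: minus_mod_eq_mult_div)
  also have "\<dots> = a * (\<Sum>i\<in>{0..<L}. i) + (\<Sum>i\<in>{0..<L}. y) - (\<Sum>i\<in>{0..<L}. (a*i+y) mod n)"
    by (simp add: sum_subtractf sum.distrib sum_distrib_left)
  finally show ?thesis .
qed

lemma NN_eq: "(q::int) \<noteq> 1 \<Longrightarrow> (q - 1) * NN q k = q^k - 1"
proof -
  assume "q \<noteq> 1"
  have "(q - 1) dvd q^k - 1" using geo_int[of q k] by (metis dvd_triv_left)
  then show ?thesis unfolding NN_def by simp
qed

lemma count_main:
  fixes q s t m :: int and b :: nat
  assumes q: "q \<ge> 2" and b: "b \<ge> 1" and s: "s \<ge> 0" and t: "t \<ge> 0" and m: "m \<ge> 0"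
  shows "2 * int (card (Psi q b s t m)) = (q^(2*b+1)+1)*q + 2*(q-1)*((t + NN q (2*b+1)*m) div q^(b-1)) + 2*s"
proof -
  define Qb where "Qb = q^b"
  define M where "M = q^(b-1)"
  define nb where "nb = NN q b"
  define n where "n = NN q (2*b+1)"
  define D where "D = q^(2*b+1) - 1"
  define w where "w = (n*m + t) div M"
  have QbM: "Qb = q*M" unfolding Qb_def M_def using b by (metis Suc_diff_le diff_Suc_1 power_Suc)
  have qc: "q^(2*b+1) = q*Qb*Qb" unfolding Qb_def by (simp add: power_add power_mult_distrib mult_2 power_Suc)
  have R1: "(q-1)*nb = Qb - 1" unfolding nb_def Qb_def using NN_eq q by simp
  have R2: "(q-1)*n = D" unfolding n_def D_def using NN_eq q by simp
  have R3: "D = q*Qb*Qb - 1" using qc D_def by simp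
  have Mpos: "M > 0" unfolding M_def using q by simp
  have Qb2: "Qb \<ge> q" unfolding Qb_def using power_increasing[of 1 b q] q b by simp
  have "Qb*Qb \<ge> 2*2" using Qb2 q by (intro mult_mono) auto
  then have "q*(Qb*Qb) \<ge> q*2" using q by (intro mult_left_mono) auto
  then have Dpos: "D \<ge> q" unfolding R3 using q by (simp add: mult.assoc)
  have npos: "n > 0"
  proof (rule ccontr)
    assume "\<not> n > 0" then have "(q-1)*n \<le> 0" using q by (simp add: mult_nonneg_nonpos)
    then show False using R2 Dpos q by simp
  qed
  have nbpos: "nb \<ge> 0"
  proof (rule ccontr)
    assume "\<not> nb \<ge> 0" then have "(q-1)*nb \<le> 0" using q by (simp add: mult_nonneg_nonpos)
    then show False using R1 Qb2 q by simp
  qed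
  have wnn: "w \<ge> 0" unfolding w_def using Mpos npos m t by (simp add: pos_imp_zdiv_nonneg_iff)
  define hi where "hi = (\<lambda>i::int. (q*nb*i + w) div n)"
  define lo where "lo = (\<lambda>i::int. - ((s - q*Qb*i) div D) - q)"
  have PsiEq: "Psi q b s t m = Sigma {0..<D} (\<lambda>i. {lo i..hi i})"
  proof -
    have e1: "(- t \<le> Qb * nb * i - M * n * j + n * m) \<longleftrightarrow> j \<le> hi i" for i j
    proof -
      have "j \<le> hi i \<longleftrightarrow> j*n \<le> q*nb*i + w" unfolding hi_def by (rule le_div_iff_int[OF npos])
      also have "\<dots> \<longleftrightarrow> j*n - q*nb*i \<le> w" by linarith
      also have "\<dots> \<longleftrightarrow> (j*n - q*nb*i)*M \<le> n*m+t" unfolding w_def by (rule le_div_iff_int[OF Mpos])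
      also have "\<dots> \<longleftrightarrow> (- t \<le> Qb * nb * i - M * n * j + n * m)" unfolding QbM by (simp add: algebra_simps)
      finally show ?thesis by simp
    qed
    have e2: "(- s - D * q \<le> - (q*Qb) * i + D * j) \<longleftrightarrow> lo i \<le> j" for i j
    proof -
      have "lo i \<le> j \<longleftrightarrow> -(j+q) \<le> (s - q*Qb*i) div D" unfolding lo_def by linarith
      also have "\<dots> \<longleftrightarrow> -(j+q)*D \<le> s - q*Qb*i" using Dpos q by (intro le_div_iff_int) simp
      also have "\<dots> \<longleftrightarrow> (- s - D * q \<le> - (q*Qb) * i + D * j)" by (simp add: algebra_simps)
      finally show ?thesis by simp
    qed
    have mem: "(i,j) \<in> Psi q b s t m \<longleftrightarrow> 0 \<le> i \<and> i < D \<and> (- t \<le> Qb * nb * i - M * n * j + n * m) \<and> (- s - D * q \<le> - (q*Qb) * i + D * j)" for i j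
    proof -
      have cc: "b + 1 + b = 2*b+1" by simp
      have qa: "q^(b+1) = q*Qb" unfolding Qb_def by simp
      have bb: "b + 1 - 1 = b" by simp
      show ?thesis unfolding Psi_def Let_def cc qa bb
        by (simp only: Qb_def[symmetric] M_def[symmetric] nb_def[symmetric] n_def[symmetric] D_def[symmetric]
          mem_Collect_eq prod.case)
    qed
    show ?thesis
    proof (rule set_eqI)
      fix x :: "int \<times> int"
      obtain i j where x: "x = (i,j)" by fastforce
      show "x \<in> Psi q b s t m \<longleftrightarrow> x \<in> Sigma {0..<D} (\<lambda>i. {lo i..hi i})"
        unfolding x mem e1 e2 by auto
    qed
  qed
  have cop_qn: "coprime q n"
  proof (rule coprimeI)
    fix c assume c1: "c dvd q" and c2: "c dvd n"
    have "c dvd q*(Qb*Qb)" using c1 by simp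
    moreover have "c dvd (q-1)*n" using c2 by simp
    ultimately have "c dvd q*(Qb*Qb) - (q-1)*n" by (rule dvd_diff)
    then have "c dvd 1" unfolding R2 R3 by (simp add: algebra_simps)
    then show "is_unit c" by simp
  qed
  have cop_nbQb: "coprime nb Qb"
  proof (rule coprimeI)
    fix c assume c1: "c dvd nb" and c2: "c dvd Qb"
    have "c dvd (q-1)*nb" using c1 by simp
    then have c3: "c dvd Qb - 1" unfolding R1 .
    have "c dvd Qb - (Qb - 1)" using c2 c3 by (rule dvd_diff)
    then have "c dvd 1" by simp
    then show "is_unit c" by simp
  qed
  have nexp: "n = nb*(1+Qb) + Qb*Qb"
  proof -
    have "(q-1)*n = (q-1)*(nb*(1+Qb) + Qb*Qb)"
    proof -
      have "(q-1)*(nb*(1+Qb) + Qb*Qb) = ((q-1)*nb)*(1+Qb) + (q-1)*Qb*Qb" by (simp add: algebra_simps)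
      also have "\<dots> = q*Qb*Qb - 1" unfolding R1 by (simp add: algebra_simps)
      finally show ?thesis using R2 R3 by simp
    qed
    then show ?thesis using q by simp
  qed
  have cop_nbn: "coprime nb n"
  proof (rule coprimeI)
    fix c assume c1: "c dvd nb" and c2: "c dvd n"
    have "c dvd n - nb*(1+Qb)" using c1 c2 by (intro dvd_diff) auto
    then have c3: "c dvd Qb*Qb" using nexp by simp
    have "coprime nb (Qb*Qb)" using cop_nbQb by simp
    then show "is_unit c" using c1 c3 coprime_common_divisor by blast
  qed
  have cop1: "coprime (q*nb) n" using cop_qn cop_nbn by simp
  have cop2: "coprime (-(q*Qb)) D"
  proof -
    have "coprime (q*Qb) D"
    proof (rule coprimeI)
      fix c assume c1: "c dvd q*Qb" and c2: "c dvd D"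
      have "c dvd q*Qb*Qb" using c1 by simp
      then have "c dvd q*Qb*Qb - D" using c2 by (intro dvd_diff)
      then show "is_unit c" unfolding R3 by simp
    qed
    then show ?thesis by simp
  qed
  define S where "S = (\<Sum>i\<in>{0..<D}. i)"
  have S2: "2*S = D*(D-1)" unfolding S_def using gauss_int' Dpos q by simp
  define SH where "SH = (\<Sum>i\<in>{0..<D}. hi i)"
  define SL0 where "SL0 = (\<Sum>i\<in>{0..<D}. (s - q*Qb*i) div D)"
  define Mh where "Mh = (\<Sum>i\<in>{0..<D}. (q*nb*i + w) mod n)"
  define Ml where "Ml = (\<Sum>i\<in>{0..<D}. ((-(q*Qb))*i + s) mod D)"
  have EH: "n*SH = q*nb*S + D*w - Mh"
    unfolding SH_def hi_def S_def Mh_def using div_sum[OF npos, of "q*nb" w D] Dpos q by simp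
  have EL: "D*SL0 = -(q*Qb)*S + D*s - Ml"
  proof -
    have "SL0 = (\<Sum>i\<in>{0..<D}. ((-(q*Qb))*i + s) div D)" unfolding SL0_def
      by (rule sum.cong) (auto simp: algebra_simps)
    then show ?thesis unfolding S_def Ml_def using div_sum[of D "-(q*Qb)" s D] Dpos q by simp
  qed
  have Mh2: "2*Mh = (q-1)*n*(n-1)"
  proof -
    have "int (nat (q-1)) * n = D" using R2 q by simp
    then show ?thesis unfolding Mh_def using multi_mod[OF npos cop1, of w "nat (q-1)"] q by simp
  qed
  have Ml2: "2*Ml = D*(D-1)"
    unfolding Ml_def using multi_mod[of D "-(q*Qb)" s 1] cop2 Dpos q by simp
  have nonneg: "lo i \<le> hi i + 1" if i: "0 \<le> i" "i < D" for i
  proof (rule ccontr)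
    assume "\<not> ?thesis" then have c: "hi i + 2 \<le> lo i" by simp
    define Y where "Y = s - q*Qb*i"
    have "D*(Y div D) = Y - Y mod D" by (simp add: minus_mod_eq_mult_div)
    moreover have "Y mod D < D" using Dpos q by simp
    ultimately have f2: "D*(Y div D) > Y - D" by simp
    have "Y div D \<le> -hi i - 2 - q" using c unfolding lo_def Y_def by simp
    then have "D*(Y div D) \<le> D*(-hi i - 2 - q)" using Dpos q by (intro mult_left_mono) auto
    then have A: "D*hi i < q*Qb*i - D - q*D" using f2 s unfolding Y_def by (simp add: algebra_simps)
    have "n * hi i = (q*nb*i+w) - (q*nb*i+w) mod n" unfolding hi_def by (simp add: minus_mod_eq_mult_div)
    moreover have "(q*nb*i+w) mod n < n" using npos by simp
    ultimately have B: "n*hi i > q*nb*i - n" using wnn by simp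
    have X1: "n*(D*hi i) < n*(q*Qb*i - D - q*D)" using A npos by (rule mult_strict_left_mono)
    have X2: "D*(q*nb*i - n) < D*(n*hi i)" using B Dpos q by (intro mult_strict_left_mono) auto
    have "D*(q*nb*i - n) < n*(q*Qb*i - D - q*D)" using X1 X2 by (simp add: algebra_simps)
    then have "(q-1)*(D*(q*nb*i - n)) < (q-1)*(n*(q*Qb*i - D - q*D))" using q by (intro mult_strict_left_mono) auto
    moreover have "(q-1)*(D*(q*nb*i - n)) = D*q*i*((q-1)*nb) - D*((q-1)*n)" by (simp add: algebra_simps)
    moreover have "(q-1)*(n*(q*Qb*i - D - q*D)) = ((q-1)*n)*(q*Qb*i - D - q*D)" by simp
    ultimately have "D*q*i*(Qb-1) - D*D < D*(q*Qb*i - D - q*D)" unfolding R1 R2 by simp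
    then have "D*(q*D) < D*(q*i)" by (simp add: algebra_simps)
    then have "q*D < q*i" using Dpos q by simp
    then have "D < i" using q by simp
    then show False using i by simp
  qed
  have cardsum: "int (card (Psi q b s t m)) = SH + SL0 + D*q + D"
  proof -
    have "card (Psi q b s t m) = (\<Sum>i\<in>{0..<D}. card {lo i..hi i})"
      unfolding PsiEq by (rule card_SigmaI) auto
    then have "int (card (Psi q b s t m)) = (\<Sum>i\<in>{0..<D}. int (nat (hi i - lo i + 1)))" by simp
    also have "\<dots> = (\<Sum>i\<in>{0..<D}. hi i - ((-((s - q*Qb*i) div D)) - q) + 1)"
    proof (rule sum.cong[OF refl])
      fix i assume "i \<in> {0..<D}"
      then have "lo i \<le> hi i + 1" using nonneg by auto
      then show "int (nat (hi i - lo i + 1)) = hi i - ((-((s - q*Qb*i) div D)) - q) + 1"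
        unfolding lo_def by simp
    qed
    also have "\<dots> = SH + SL0 + D*q + D"
      unfolding SH_def SL0_def using Dpos q by (simp add: sum.distrib sum_subtractf algebra_simps)
    finally show ?thesis .
  qed
  have H1: "D*(2*SL0) = D*(-(q*Qb)*(D-1) + 2*s - (D-1))"
    using EL S2 Ml2 by algebra
  have H2: "D*(2*SH) = D*(q*(Qb-1)*(D-1) + 2*(q-1)*w - D + q - 1)"
    using EH S2 Mh2 R1 R2 by algebra
  have H1': "2*SL0 = -(q*Qb)*(D-1) + 2*s - (D-1)" using H1 Dpos q by simp
  have H2': "2*SH = q*(Qb-1)*(D-1) + 2*(q-1)*w - D + q - 1" using H2 Dpos q by simp
  have wd: "(t + NN q (2*b+1)*m) div q^(b-1) = w" unfolding w_def n_def M_def by (simp add: add.commute)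
  show ?thesis unfolding wd qc cardsum using H1' H2' R3 by algebra
qed

lemma sum_main:
  fixes q s t :: int and b :: nat
  assumes q: "q \<ge> 2" and b: "b \<ge> 1" and s: "s \<ge> 0" and t: "t \<ge> 0"
  shows "2 * int (\<Sum>m\<in>{0..<q ^ (b - 1)}. card (Psi q b s t m))
     = (q ^ (2*b+1 + b - 1) + q ^ (2*b+1 + b) - q ^ (2*b+1) + q) + 2 * (q ^ (b - 1) * s + (q - 1) * t)"
proof -
  define M where "M = q^(b-1)"
  define n where "n = NN q (2*b+1)"
  define Qc where "Qc = q^(2*b+1)"
  have Mpos: "M > 0" unfolding M_def using q by simp
  have R2: "(q-1)*n = Qc - 1" unfolding n_def Qc_def using NN_eq q by simp
  have ee: "2*b+1+b-1 = (2*b+1)+(b-1)" using b by simp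
  have e1: "q ^ (2*b+1 + b - 1) = Qc*M" unfolding Qc_def M_def ee by (rule power_add)
  have e2: "q ^ (2*b+1 + b) = Qc*q*M" unfolding Qc_def M_def using b
    by (metis Suc_diff_le diff_Suc_1 mult.assoc power_Suc power_add)
  have cop_qn: "coprime n q"
  proof (rule coprimeI)
    fix c assume c2: "c dvd n" and c1: "c dvd q"
    have "c dvd q*q^(2*b)" using c1 by simp
    moreover have "c dvd (q-1)*n" using c2 by simp
    ultimately have "c dvd q*q^(2*b) - (q-1)*n" by (rule dvd_diff)
    then have "c dvd 1" unfolding R2 Qc_def by (simp add: algebra_simps)
    then show "is_unit c" by simp
  qed
  have cop: "coprime n M" unfolding M_def using cop_qn by simp
  have "2 * int (\<Sum>m\<in>{0..<M}. card (Psi q b s t m)) = (\<Sum>m\<in>{0..<M}. 2 * int (card (Psi q b s t m)))"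
    by (simp add: sum_distrib_left)
  also have "\<dots> = (\<Sum>m\<in>{0..<M}. (Qc+1)*q + 2*(q-1)*((n*m + t) div M) + 2*s)"
    using count_main[OF q b s t] unfolding Qc_def n_def M_def by (intro sum.cong refl) (simp add: add.commute)
  also have "\<dots> = M*((Qc+1)*q) + 2*(q-1)*(\<Sum>m\<in>{0..<M}. (n*m + t) div M) + M*(2*s)"
    using Mpos by (simp add: sum.distrib sum_distrib_left)
  finally have E0: "2 * int (\<Sum>m\<in>{0..<M}. card (Psi q b s t m)) = M*((Qc+1)*q) + 2*(q-1)*(\<Sum>m\<in>{0..<M}. (n*m + t) div M) + M*(2*s)" .
  define SW where "SW = (\<Sum>m\<in>{0..<M}. (n*m + t) div M)"
  define SM where "SM = (\<Sum>m\<in>{0..<M}. m)"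
  define Md where "Md = (\<Sum>m\<in>{0..<M}. (n*m + t) mod M)"
  have EW: "M*SW = n*SM + M*t - Md" unfolding SW_def SM_def Md_def using div_sum[OF Mpos, of n t M] Mpos by simp
  have S2: "2*SM = M*(M-1)" unfolding SM_def using gauss_int' Mpos by simp
  have Md2: "2*Md = M*(M-1)" unfolding Md_def using multi_mod[OF Mpos cop, of t 1] by simp
  have H: "M*(2*SW) = M*((n-1)*(M-1) + 2*t)" using EW S2 Md2 by algebra
  have H': "2*SW = (n-1)*(M-1) + 2*t" using H Mpos by simp
  show ?thesis unfolding e1 e2 M_def[symmetric] Qc_def[symmetric] E0 SW_def[symmetric]
    using H' R2 by algebra
qed

theorem lemma2:
  fixes q p :: int and e b :: nat and s t :: int
  assumes "prime p" and "e \<ge> 1" and "q = p ^ e"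
    and "b \<ge> 1" and "s \<ge> 0" and "t \<ge> 0"
  shows "(\<forall>m::int. 0 \<le> m \<and> m < q ^ (b - 1) \<longrightarrow>
            real (card (Psi q b s t m)) =
              real_of_int ((q ^ (2*b+1) + 1) * q) / 2
              + real_of_int (q - 1) * real_of_int \<lfloor>real_of_int (t + NN q (2*b+1) * m) / real_of_int (q ^ (b - 1))\<rfloor>
              + real_of_int s)
       \<and> real (\<Sum>m\<in>{0..<q ^ (b - 1)}. card (Psi q b s t m)) =
           real_of_int (q ^ (2*b+1 + b - 1) + q ^ (2*b+1 + b) - q ^ (2*b+1) + q) / 2
           + real_of_int (q ^ (b - 1) * s + (q - 1) * t)"
proof -
  have p2: "p \<ge> 2" using prime_gt_1_int[OF assms(1)] by simp
  have "p^1 \<le> p^e" using assms(2) p2 by (intro power_increasing) auto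
  then have q: "q \<ge> 2" using assms(3) p2 by simp
  have A: "\<forall>m::int. 0 \<le> m \<and> m < q ^ (b - 1) \<longrightarrow>
            real (card (Psi q b s t m)) =
              real_of_int ((q ^ (2*b+1) + 1) * q) / 2
              + real_of_int (q - 1) * real_of_int \<lfloor>real_of_int (t + NN q (2*b+1) * m) / real_of_int (q ^ (b - 1))\<rfloor>
              + real_of_int s"
  proof (intro allI impI)
    fix m :: int assume "0 \<le> m \<and> m < q ^ (b - 1)"
    then have m: "m \<ge> 0" by simp
    have c: "2 * int (card (Psi q b s t m)) = (q^(2*b+1)+1)*q + 2*(q-1)*((t + NN q (2*b+1)*m) div q^(b-1)) + 2*s"
      by (rule count_main[OF q assms(4,5,6) m])
    have "real (card (Psi q b s t m)) = real_of_int (2 * int (card (Psi q b s t m))) / 2" by simp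
    also have "\<dots> = real_of_int ((q ^ (2*b+1) + 1) * q) / 2
              + real_of_int (q - 1) * real_of_int ((t + NN q (2*b+1)*m) div q^(b-1)) + real_of_int s"
      unfolding c by simp
    finally show "real (card (Psi q b s t m)) =
              real_of_int ((q ^ (2*b+1) + 1) * q) / 2
              + real_of_int (q - 1) * real_of_int \<lfloor>real_of_int (t + NN q (2*b+1) * m) / real_of_int (q ^ (b - 1))\<rfloor>
              + real_of_int s" by (simp only: floor_divide_of_int_eq)
  qed
  have B: "real (\<Sum>m\<in>{0..<q ^ (b - 1)}. card (Psi q b s t m)) =
           real_of_int (q ^ (2*b+1 + b - 1) + q ^ (2*b+1 + b) - q ^ (2*b+1) + q) / 2
           + real_of_int (q ^ (b - 1) * s + (q - 1) * t)"
  proof -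
    have "real (\<Sum>m\<in>{0..<q ^ (b - 1)}. card (Psi q b s t m)) = real_of_int (2 * int (\<Sum>m\<in>{0..<q ^ (b - 1)}. card (Psi q b s t m))) / 2"
      by simp
    also have "\<dots> = real_of_int (q ^ (2*b+1 + b - 1) + q ^ (2*b+1 + b) - q ^ (2*b+1) + q) / 2
           + real_of_int (q ^ (b - 1) * s + (q - 1) * t)"
      unfolding sum_main[OF q assms(4,5,6)] by simp
    finally show ?thesis .
  qed
  show ?thesis using A B by blast
qed
end
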